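(* Let $\mathcal{T}=(V,A,E,f,q,v_0)$ be a decorated rooted tree that has negative determinants and satisfies $f(A)\subseteq\mathbb{N}=\{0,1,2,\dots\}$. Let $v,v'\in V$ with $v<v'$ and suppose the path $\gamma=\gamma_{v,v'}=(x_0,\dots,x_n)$ is linear; let $q=q(\{x_0,x_1\},v)$ and $Q'=Q(\{x_{n-1},x_n\},v')$. (a) $q>0$, $Q'>0$, and $q\,N_{v'}-Q'\,N_v\le0$. (b) If there exists $\alpha\in A\setminus A_0$ with $\alpha>v'$, then $q\,N_{v'}-Q'\,N_v<0$.
   Context: A graph is a pair $(X_0,X_1)$ of finite sets such that each element of $X_1$ (an edge) is a $2$-element subset of $X_0$; elements of $X_0$ are cells. The valency $\delta_x$ of a cell is the number of edges containing it. A path is a tuple $(x_0,\dots,x_n)$ ($n\ge0$) of cells with $\{x_i,x_{i+1}\}$ an edge for each $i<n$, these edges pairwise distinct; a cell/edge is in the path if it is some $x_i$ / some $\{x_i,x_{i+1}\}$. The graph is a tree if any two cells $x,y$ are joined by a unique path $\gamma_{x,y}$. A decorated tree is $(V,A,E,f,q)$ with $V$ (vertices), $A$ (arrows) finite disjoint sets, $(V\cup A,E)$ a tree, every arrow of valency $1$, $f:A\to\mathbb{Z}$, $q(e,x)\in\mathbb{Z}$ for each $e\in E$, $x\in e$, with $q(e,\alpha)=1$ for $\alpha\in A$, and for each $v\in V$ and distinct edges $e,e'\ni v$, $\gcd(q(e,v),q(e',v))=1$. $A_0=\{\alpha\in A:f(\alpha)=0\}$. For $x\in V\cup A$, $e\ni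 x$: $Q(e,x)=\prod q(e',x)$ over edges $e'\ne e$ containing $x$ (empty product $=1$); $\det(\{x,y\})=q(e,x)q(e,y)-Q(e,x)Q(e,y)$ for $e=\{x,y\}$. An edge $\varepsilon$ is incident to a path $\gamma$ if it is not in $\gamma$ but contains a cell $u$ of $\gamma$; $q(\varepsilon,\gamma):=q(\varepsilon,u)$. For $v\ne\alpha$, $v\in V\cup A$, $\alpha\in A$: $x_{v,\alpha}=f(\alpha)\prod_\varepsilon q(\varepsilon,\gamma_{v,\alpha})$ over edges incident to $\gamma_{v,\alpha}$. For $v\in V\cup A_0$, $N_v=\sum_{\alpha\in A\setminus A_0}x_{v,\alpha}$. A path $(x_0,\dots,x_n)$, $n>0$, is linear if $\delta_{x_i}=2$ for all $0<i<n$. A root of $(V,A,E,f,q)$ is a vertex $v_0$ with $q(e,v_0)=1$ for every edge $e\ni v_0$ such that for every $v\in V\setminus\{v_0\}$, all edges $e\ni v$ not in $\gamma_{v_0,v}$ satisfy $q(e,v)\ge1$ and at most one of them satisfies $q(e,v)\ne1$. A decorated rooted tree is $(V,A,E,f,q,v_0)$ with $v_0$ a root. For distinct $x,y\in V\cup A$, $x<y$ means $x$ is in $\gamma_{v_0,y}$. $\mathcal{T}$ has negative determinants if $\det(e)<0$ for every edge $e=\{x,y\}$ with $x,y\in V$. *)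

theory Defs
  imports Main
begin

definition is_graph :: "'a set \<Rightarrow> 'a set set \<Rightarrow> bool" where
  "is_graph X0 X1 \<longleftrightarrow> finite X0 \<and> finite X1 \<and> (\<forall>e\<in>X1. e \<subseteq> X0 \<and> card e = 2)"

definition valency :: "'a set set \<Rightarrow> 'a \<Rightarrow> nat" where
  "valency X1 x = card {e \<in> X1. x \<in> e}"

definition path_edges :: "'a list \<Rightarrow> 'a set list" where
  "path_edges xs = map (\<lambda>(a, b). {a, b}) (zip xs (tl xs))"

definition is_path :: "'a set \<Rightarrow> 'a set set \<Rightarrow> 'a list \<Rightarrow> bool" where
  "is_path X0 X1 xs \<longleftrightarrow> xs \<noteq> [] \<and> set xs \<subseteq> X0 \<and> set (path_edges xs) \<subseteq> X1
     \<and> distinct (path_edges xs)"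

definition is_tree :: "'a set \<Rightarrow> 'a set set \<Rightarrow> bool" where
  "is_tree X0 X1 \<longleftrightarrow> is_graph X0 X1 \<and>
     (\<forall>x\<in>X0. \<forall>y\<in>X0. \<exists>!p. is_path X0 X1 p \<and> hd p = x \<and> last p = y)"

definition gpath :: "'a set \<Rightarrow> 'a set set \<Rightarrow> 'a \<Rightarrow> 'a \<Rightarrow> 'a list" where
  "gpath X0 X1 x y = (THE p. is_path X0 X1 p \<and> hd p = x \<and> last p = y)"

definition linear_path :: "'a set set \<Rightarrow> 'a list \<Rightarrow> bool" where
  "linear_path X1 xs \<longleftrightarrow> length xs \<ge> 2 \<and>
     (\<forall>i. 0 < i \<and> i < length xs - 1 \<longrightarrow> valency X1 (xs ! i) = 2)"

text \<open>f is given on all of the type but only its values on A matter; similarly q.\<close>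
definition decorated_tree ::
  "'a set \<Rightarrow> 'a set \<Rightarrow> 'a set set \<Rightarrow> ('a \<Rightarrow> int) \<Rightarrow> ('a set \<Rightarrow> 'a \<Rightarrow> int) \<Rightarrow> bool" where
  "decorated_tree V A E f q \<longleftrightarrow>
     finite V \<and> finite A \<and> V \<inter> A = {} \<and> is_tree (V \<union> A) E \<and>
     (\<forall>\<alpha>\<in>A. valency E \<alpha> = 1) \<and>
     (\<forall>e\<in>E. \<forall>\<alpha>\<in>A. \<alpha> \<in> e \<longrightarrow> q e \<alpha> = 1) \<and>
     (\<forall>v\<in>V. \<forall>e\<in>E. \<forall>e'\<in>E. v \<in> e \<and> v \<in> e' \<and> e \<noteq> e' \<longrightarrow> gcd (q e v) (q e' v) = 1)"

definition A0 :: "'a set \<Rightarrow> ('a \<Rightarrow> int) \<Rightarrow> 'a set" where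
  "A0 A f = {\<alpha> \<in> A. f \<alpha> = 0}"

definition bigQ :: "'a set set \<Rightarrow> ('a set \<Rightarrow> 'a \<Rightarrow> int) \<Rightarrow> 'a set \<Rightarrow> 'a \<Rightarrow> int" where
  "bigQ E q e x = (\<Prod>e'\<in>{e' \<in> E. x \<in> e' \<and> e' \<noteq> e}. q e' x)"

definition edge_det :: "'a set set \<Rightarrow> ('a set \<Rightarrow> 'a \<Rightarrow> int) \<Rightarrow> 'a \<Rightarrow> 'a \<Rightarrow> int" where
  "edge_det E q x y = q {x, y} x * q {x, y} y - bigQ E q {x, y} x * bigQ E q {x, y} y"

definition negative_determinants ::
  "'a set \<Rightarrow> 'a set set \<Rightarrow> ('a set \<Rightarrow> 'a \<Rightarrow> int) \<Rightarrow> bool" where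
  "negative_determinants V E q \<longleftrightarrow>
     (\<forall>x\<in>V. \<forall>y\<in>V. {x, y} \<in> E \<longrightarrow> edge_det E q x y < 0)"

definition incident_edges :: "'a set set \<Rightarrow> 'a list \<Rightarrow> 'a set set" where
  "incident_edges E \<gamma> = {\<epsilon> \<in> E. \<epsilon> \<notin> set (path_edges \<gamma>) \<and> (\<exists>u\<in>set \<gamma>. u \<in> \<epsilon>)}"

definition q_path :: "('a set \<Rightarrow> 'a \<Rightarrow> int) \<Rightarrow> 'a set \<Rightarrow> 'a list \<Rightarrow> int" where
  "q_path q \<epsilon> \<gamma> = q \<epsilon> (SOME u. u \<in> set \<gamma> \<and> u \<in> \<epsilon>)"

definition x_va ::
  "'a set \<Rightarrow> 'a set \<Rightarrow> 'a set set \<Rightarrow> ('a \<Rightarrow> int) \<Rightarrow> ('a set \<Rightarrow> 'a \<Rightarrow> int) \<Rightarrow> 'a \<Rightarrow> 'a \<Rightarrow> int" where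
  "x_va V A E f q v \<alpha> =
     f \<alpha> * (\<Prod>\<epsilon>\<in>incident_edges E (gpath (V \<union> A) E v \<alpha>). q_path q \<epsilon> (gpath (V \<union> A) E v \<alpha>))"

definition N_v ::
  "'a set \<Rightarrow> 'a set \<Rightarrow> 'a set set \<Rightarrow> ('a \<Rightarrow> int) \<Rightarrow> ('a set \<Rightarrow> 'a \<Rightarrow> int) \<Rightarrow> 'a \<Rightarrow> int" where
  "N_v V A E f q v = (\<Sum>\<alpha>\<in>A - A0 A f. x_va V A E f q v \<alpha>)"

definition is_root ::
  "'a set \<Rightarrow> 'a set \<Rightarrow> 'a set set \<Rightarrow> ('a set \<Rightarrow> 'a \<Rightarrow> int) \<Rightarrow> 'a \<Rightarrow> bool" where
  "is_root V A E q v0 \<longleftrightarrow> v0 \<in> V \<and> (\<forall>e\<in>E. v0 \<in> e \<longrightarrow> q e v0 = 1) \<and>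
     (\<forall>v\<in>V - {v0}.
        (\<forall>e\<in>E. v \<in> e \<and> e \<notin> set (path_edges (gpath (V \<union> A) E v0 v)) \<longrightarrow> q e v \<ge> 1) \<and>
        card {e \<in> E. v \<in> e \<and> e \<notin> set (path_edges (gpath (V \<union> A) E v0 v)) \<and> q e v \<noteq> 1} \<le> 1)"

definition decorated_rooted_tree ::
  "'a set \<Rightarrow> 'a set \<Rightarrow> 'a set set \<Rightarrow> ('a \<Rightarrow> int) \<Rightarrow> ('a set \<Rightarrow> 'a \<Rightarrow> int) \<Rightarrow> 'a \<Rightarrow> bool" where
  "decorated_rooted_tree V A E f q v0 \<longleftrightarrow> decorated_tree V A E f q \<and> is_root V A E q v0"

definition tree_less :: "'a set \<Rightarrow> 'a set \<Rightarrow> 'a set set \<Rightarrow> 'a \<Rightarrow> 'a \<Rightarrow> 'a \<Rightarrow> bool" where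
  "tree_less V A E v0 x y \<longleftrightarrow> x \<in> V \<union> A \<and> y \<in> V \<union> A \<and> x \<noteq> y \<and>
     x \<in> set (gpath (V \<union> A) E v0 y)"

end

theory Submission
  imports Defs
begin

lemma path_edges_length[simp]: "length (path_edges xs) = length xs - 1"
  by (simp add: path_edges_def)

lemma path_edges_nth: "i < length xs - 1 \<Longrightarrow> path_edges xs ! i = {xs ! i, xs ! Suc i}"
  by (simp add: path_edges_def nth_tl)

lemma set_path_edges: "e \<in> set (path_edges xs) \<longleftrightarrow> (\<exists>i < length xs - 1. e = {xs ! i, xs ! Suc i})"
  by (auto simp: in_set_conv_nth path_edges_nth)

lemma path_edges_Cons2[simp]: "path_edges (x # y # zs) = {x, y} # path_edges (y # zs)"
  by (simp add: path_edges_def)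

lemma path_edges_single[simp]: "path_edges [x] = []"
  by (simp add: path_edges_def)

lemma path_edges_Nil[simp]: "path_edges [] = []"
  by (simp add: path_edges_def)

lemma path_edges_append:
  "xs \<noteq> [] \<Longrightarrow> ys \<noteq> [] \<Longrightarrow> last xs = hd ys \<Longrightarrow> path_edges (xs @ tl ys) = path_edges xs @ path_edges ys"
proof (induction xs rule: induct_list012)
  case 1 then show ?case by simp
next
  case (2 x) then show ?case by (cases ys) auto
next
  case (3 x y zs) then show ?case by simp
qed

lemma path_edges_take: "path_edges (take k xs) = take (k - 1) (path_edges xs)"
  by (rule nth_equalityI) (auto simp: path_edges_nth)

lemma path_edges_drop: "path_edges (drop k xs) = drop k (path_edges xs)"
  by (rule nth_equalityI) (auto simp: path_edges_nth add.commute)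

lemma path_edges_rev: "path_edges (rev xs) = rev (path_edges xs)"
  by (rule nth_equalityI) (auto simp: path_edges_nth rev_nth insert_commute Suc_diff_Suc)

lemma is_path_take: "is_path X E p \<Longrightarrow> 0 < k \<Longrightarrow> is_path X E (take k p)"
  unfolding is_path_def path_edges_take
  by (auto dest: in_set_takeD)

lemma is_path_drop: "is_path X E p \<Longrightarrow> k < length p \<Longrightarrow> is_path X E (drop k p)"
  unfolding is_path_def path_edges_drop
  by (auto dest: in_set_dropD)

lemma is_path_rev: "is_path X E p \<Longrightarrow> is_path X E (rev p)"
  unfolding is_path_def path_edges_rev by auto

lemma is_path_single: "x \<in> X \<Longrightarrow> is_path X E [x]"
  unfolding is_path_def by auto

lemma is_path_edge: "is_path X E p \<Longrightarrow> i < length p - 1 \<Longrightarrow> {p ! i, p ! Suc i} \<in> E"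
  unfolding is_path_def using set_path_edges by blast

lemma edge_in_set: "e \<in> set (path_edges p) \<Longrightarrow> e \<subseteq> set p"
  unfolding set_path_edges by auto

locale tr =
  fixes X :: "'a set" and E :: "'a set set"
  assumes T: "is_tree X E"
begin

lemma finE: "finite E" and finX: "finite X" and card2: "e \<in> E \<Longrightarrow> card e = 2"
  and subX: "e \<in> E \<Longrightarrow> e \<subseteq> X"
  using T unfolding is_tree_def is_graph_def by auto

lemma edge_neq: "{a, b} \<in> E \<Longrightarrow> a \<noteq> b"
  using card2 by fastforce

lemma gp: "x \<in> X \<Longrightarrow> y \<in> X \<Longrightarrow> is_path X E (gpath X E x y) \<and> hd (gpath X E x y) = x \<and> last (gpath X E x y) = y"
proof -
  assume xy: "x \<in> X" "y \<in> X"
  have "\<exists>!p. is_path X E p \<and> hd p = x \<and> last p = y" using T xy unfolding is_tree_def by blast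
  then show ?thesis unfolding gpath_def by (rule theI')
qed

lemma gp_unique: "is_path X E p \<Longrightarrow> gpath X E (hd p) (last p) = p"
  unfolding gpath_def
proof (rule the1_equality)
  assume p: "is_path X E p"
  then have "hd p \<in> X" "last p \<in> X" unfolding is_path_def by auto
  then show "\<exists>!pa. is_path X E pa \<and> hd pa = hd p \<and> last pa = last p"
    using T unfolding is_tree_def by blast
qed auto

lemma gp_refl: "x \<in> X \<Longrightarrow> gpath X E x x = [x]"
  using gp_unique[OF is_path_single[of x X E]] by simp

lemma path_distinct: "is_path X E p \<Longrightarrow> distinct p"
proof (rule ccontr)
  assume p: "is_path X E p" and nd: "\<not> distinct p"
  then obtain i j where ij: "i < j" "j < length p" "p ! i = p ! j"
    by (metis distinct_conv_nth linorder_neqE_nat)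
  define s where "s = drop i (take (Suc j) p)"
  have "is_path X E (take (Suc j) p)" using is_path_take[OF p] by simp
  then have sp: "is_path X E s" unfolding s_def using ij by (intro is_path_drop) auto
  have "hd s = p ! i" "last s = p ! j" unfolding s_def using ij
    by (auto simp: hd_drop_conv_nth last_conv_nth)
  moreover have "hd s \<in> X" using sp unfolding is_path_def by auto
  ultimately have "s = [p ! i]" using gp_unique[OF sp] ij gp_refl by simp
  then have "length s = 1" by simp
  moreover have "length s = Suc j - i" unfolding s_def using ij by simp
  ultimately show False using ij(1) by linarith
qed

lemma gp_take_drop:
  assumes p: "is_path X E p" and i: "i < length p"
  shows "gpath X E (hd p) (p ! i) = take (Suc i) p" "gpath X E (p ! i) (last p) = drop i p"
proof -
  have p0: "p \<noteq> []" using p unfolding is_path_def by simp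
  show "gpath X E (hd p) (p ! i) = take (Suc i) p"
  proof -
    have "hd (take (Suc i) p) = hd p" using p0 by (cases p) auto
    moreover have "last (take (Suc i) p) = p ! i"
      using i p0 by (auto simp: take_Suc_conv_app_nth)
    then show ?thesis using gp_unique[OF is_path_take[OF p, of "Suc i"]] by simp
  qed
  show "gpath X E (p ! i) (last p) = drop i p"
    using gp_unique[OF is_path_drop[OF p i]] i p0
    by (simp add: hd_drop_conv_nth)
qed

lemma gp_split:
  assumes p: "is_path X E p" and y: "y \<in> set p"
  shows "p = gpath X E (hd p) y @ tl (gpath X E y (last p))"
proof -
  obtain i where i: "i < length p" "y = p ! i" using y by (auto simp: in_set_conv_nth)
  show ?thesis using gp_take_drop[OF p i(1)] i by (simp add: tl_drop drop_Suc[symmetric])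
qed

lemma gp_rev: "x \<in> X \<Longrightarrow> y \<in> X \<Longrightarrow> gpath X E y x = rev (gpath X E x y)"
  using gp_unique[OF is_path_rev, of "gpath X E x y"] gp[of x y]
  by (metis hd_rev last_rev)

lemma path_concat:
  assumes p: "is_path X E xs" "is_path X E ys" and l: "last xs = hd ys"
    and d: "set xs \<inter> set ys \<subseteq> {hd ys}"
  shows "is_path X E (xs @ tl ys)"
proof -
  have ne: "xs \<noteq> []" "ys \<noteq> []" using p unfolding is_path_def by auto
  have disj: "set (path_edges xs) \<inter> set (path_edges ys) = {}"
  proof (rule ccontr)
    assume "\<not> ?thesis"
    then obtain e where e: "e \<in> set (path_edges xs)" "e \<in> set (path_edges ys)" by blast
    then have "e \<subseteq> {hd ys}" using d edge_in_set by blast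
    moreover have "card e = 2" using e p card2 unfolding is_path_def by auto
    moreover have "card e \<le> card {hd ys}" by (rule card_mono) (use calculation in auto)
    ultimately show False by simp
  qed
  have "set (tl ys) \<subseteq> set ys" using ne(2) by (cases ys) auto
  then show ?thesis using p ne l disj unfolding is_path_def path_edges_append[OF ne l]
    by auto
qed

end

definition W :: "'a set set \<Rightarrow> ('a set \<Rightarrow> 'a \<Rightarrow> int) \<Rightarrow> 'a list \<Rightarrow> int" where
  "W E q p = (\<Prod>u\<in>set p. \<Prod>\<epsilon>\<in>{\<epsilon>\<in>E. u \<in> \<epsilon> \<and> \<epsilon> \<notin> set (path_edges p)}. q \<epsilon> u)"

lemma distinct_edge_idx:
  assumes "distinct p" "i < length p - 1" "j < length p" "p ! j \<in> {p ! i, p ! Suc i}"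
  shows "j = i \<or> j = Suc i"
  using assms nth_eq_iff_index_eq by fastforce

context tr begin

lemma both_in_path:
  assumes p: "is_path X E p" and e: "e \<in> E" "a \<in> e" "b \<in> e" "a \<noteq> b" "a \<in> set p" "b \<in> set p"
  shows "e \<in> set (path_edges p)"
proof -
  have eab: "e = {a, b}"
  proof -
    have "card e = 2" using card2 e by simp
    then obtain x y where "e = {x, y}" "x \<noteq> y" by (meson card_2_iff)
    then show ?thesis using e by auto
  qed
  have key: "{p ! i, p ! j} \<in> set (path_edges p)"
    if ij: "i < j" "j < length p" and E: "{p ! i, p ! j} \<in> E" for i j
  proof -
    define t where "t = take (Suc j) p"
    have tp: "is_path X E t" unfolding t_def by (rule is_path_take[OF p]) simp
    have lt: "length t = Suc j" "last t = p ! j" "t ! i = p ! i" unfolding t_def using ij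
      by (auto simp: take_Suc_conv_app_nth nth_append)
    have "gpath X E (t ! i) (last t) = drop i t" using gp_take_drop(2)[OF tp, of i] lt ij by simp
    moreover have "is_path X E [p ! i, p ! j]" using E subX unfolding is_path_def by auto
    then have "gpath X E (p ! i) (p ! j) = [p ! i, p ! j]" using gp_unique by fastforce
    ultimately have "drop i t = [p ! i, p ! j]" using lt by simp
    then have "length (drop i t) = 2" by simp
    then have "j = Suc i" using lt by simp
    then show ?thesis using ij unfolding set_path_edges by (intro exI[of _ i]) auto
  qed
  obtain i where i: "i < length p" "a = p ! i"
    using e(5) by (auto simp: in_set_conv_nth)
  obtain j where j: "j < length p" "b = p ! j"
    using e(6) by (auto simp: in_set_conv_nth)
  have "i \<noteq> j" using i j e(4) by auto
  have eE: "{p ! i, p ! j} \<in> E" using e(1) eab i j by simp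
  show ?thesis
  proof (cases "i < j")
    case True then show ?thesis using key[OF True j(1) eE] i j eab by simp
  next
    case False
    then have "j < i" using \<open>i \<noteq> j\<close> by simp
    moreover have "{p ! j, p ! i} \<in> E" using eE by (simp add: insert_commute)
    ultimately show ?thesis using key[of j i] i j eab by (simp add: insert_commute)
  qed
qed

lemma valency_step:
  assumes p: "is_path X E p" and j: "0 < j" "j < length p - 1"
    and val: "valency E (p ! j) = 2" and z: "{p ! j, z} \<in> E"
  shows "z \<in> set p"
proof -
  let ?S = "{e \<in> E. p ! j \<in> e}"
  define e1 where "e1 = {p ! (j - 1), p ! j}"
  define e2 where "e2 = {p ! j, p ! Suc j}"
  have d: "distinct (path_edges p)" "set (path_edges p) \<subseteq> E" using p unfolding is_path_def by auto
  have j1: "j - 1 < length (path_edges p)" "j < length (path_edges p)" using j by auto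
  have E1: "e1 = path_edges p ! (j - 1)" unfolding e1_def using j by (simp add: path_edges_nth)
  have E2: "e2 = path_edges p ! j" unfolding e2_def using j by (simp add: path_edges_nth)
  have "e1 \<noteq> e2" unfolding E1 E2 using nth_eq_iff_index_eq[OF d(1) j1] j by simp
  moreover have "e1 \<in> E" "e2 \<in> E" unfolding E1 E2 using d(2) nth_mem[OF j1(1)] nth_mem[OF j1(2)] by blast+
  ultimately have in12: "e1 \<in> ?S" "e2 \<in> ?S" "e1 \<noteq> e2" unfolding e1_def e2_def by auto
  have "card ?S = 2" using val unfolding valency_def by simp
  then obtain a b where ab: "?S = {a, b}" unfolding card_2_iff by blast
  have "e1 \<in> {a, b}" "e2 \<in> {a, b}" using in12(1,2) unfolding ab by simp_all
  then have ab2: "{a, b} = {e1, e2}" using in12(3) by auto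
  have "{p ! j, z} \<in> ?S" using z by simp
  then have "{p ! j, z} \<in> {e1, e2}" unfolding ab ab2 .
  then have "z \<in> e1 \<union> e2" by blast
  moreover have "e1 \<union> e2 \<subseteq> set p" unfolding e1_def e2_def using j by auto
  ultimately show ?thesis by blast
qed

definition lin :: "'a list \<Rightarrow> bool" where
  "lin g \<longleftrightarrow> is_path X E g \<and> length g \<ge> 2 \<and> (\<forall>i. 0 < i \<and> i < length g - 1 \<longrightarrow> valency E (g ! i) = 2)"

lemma lin_rev: "lin g \<Longrightarrow> lin (rev g)"
proof -
  assume g: "lin g"
  show "lin (rev g)" unfolding lin_def
  proof (intro conjI allI impI)
    fix i assume i: "0 < i \<and> i < length (rev g) - 1"
    then have "rev g ! i = g ! (length g - 1 - i)" using i by (simp add: rev_nth)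
    moreover have "0 < length g - 1 - i" "length g - 1 - i < length g - 1" using i by auto
    ultimately show "valency E (rev g ! i) = 2" using g unfolding lin_def by simp
  qed (use g is_path_rev in \<open>auto simp: lin_def\<close>)
qed

lemma lin_propagate:
  assumes g: "lin g" and p: "is_path X E p" and h: "hd p = hd g" and g1: "g ! 1 \<in> set p"
    and l: "\<forall>i. 0 < i \<and> i < length g - 1 \<longrightarrow> last p \<noteq> g ! i"
  shows "last g \<in> set p"
proof -
  have gp': "is_path X E g" "length g \<ge> 2" and val: "\<And>i. 0 < i \<Longrightarrow> i < length g - 1 \<Longrightarrow> valency E (g ! i) = 2"
    using g unfolding lin_def by auto
  have dg: "distinct g" using path_distinct gp' by simp
  have p0: "p \<noteq> []" using p unfolding is_path_def by simp
  have "g ! k \<in> set p" if "1 \<le> k" "k \<le> length g - 1" for k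
    using that
  proof (induction k rule: dec_induct)
    case base then show ?case using g1 by simp
  next
    case (step k)
    then obtain j where j: "j < length p" "p ! j = g ! k" by (auto simp: in_set_conv_nth)
    have gne: "g \<noteq> []" using gp' by auto
    have kl: "k < length g" using step by simp
    have "j \<noteq> 0"
    proof
      assume "j = 0"
      then have "g ! k = g ! 0" using j h p0 gne by (simp add: hd_conv_nth)
      then have "k = 0" using nth_eq_iff_index_eq[OF dg kl] gne by simp
      then show False using step by simp
    qed
    moreover have "j \<noteq> length p - 1"
    proof
      assume "j = length p - 1"
      then have "last p = g ! k" using j p0 by (simp add: last_conv_nth)
      moreover have "0 < k" "k < length g - 1" using step by auto
      ultimately show False using l by blast
    qed
    ultimately have "0 < j" "j < length p - 1" using j by auto
    moreover have "{p ! j, g ! Suc k} \<in> E" using is_path_edge[OF gp'(1), of k] j step by simp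
    ultimately show ?case using valency_step[OF p] val[of k] j step by simp
  qed
  then have "g ! (length g - 1) \<in> set p" using gp'(2) by simp
  moreover have "g \<noteq> []" using gp' by auto
  then have "last g = g ! (length g - 1)" by (simp add: last_conv_nth)
  ultimately show ?thesis by simp
qed

lemma meet_one:
  assumes r: "is_path X E r" and p: "is_path X E p" and l: "last r = hd p" and len: "length r \<ge> 2"
    and y: "r ! (length r - 2) \<notin> set p"
  shows "set r \<inter> set p = {last r}"
proof -
  have r0: "r \<noteq> []" and p0: "p \<noteq> []" using r p unfolding is_path_def by auto
  have "w = last r" if w: "w \<in> set r" "w \<in> set p" for w
  proof (rule ccontr)
    assume wn: "w \<noteq> last r"
    obtain i where i: "i < length r" "w = r ! i" using w(1) by (metis in_set_conv_nth)
    have "i \<noteq> length r - 1" using wn i r0 last_conv_nth by metis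
    then have i2: "i \<le> length r - 2" using i by linarith
    have G: "gpath X E w (last r) = drop i r" using gp_take_drop(2)[OF r i(1)] i by simp
    have "drop i r ! (length r - 2 - i) = r ! (length r - 2)" using i2 len i by simp
    moreover have "length r - 2 - i < length (drop i r)" using i2 len i by simp
    ultimately have "r ! (length r - 2) \<in> set (gpath X E w (last r))"
      unfolding G by (metis nth_mem)
    moreover have "w \<in> X" "last r \<in> X" using w r r0 unfolding is_path_def by auto
    ultimately have A: "r ! (length r - 2) \<in> set (gpath X E (last r) w)" using gp_rev[of w "last r"] by simp
    obtain j where j: "j < length p" "w = p ! j" using w(2) by (metis in_set_conv_nth)
    have "gpath X E (last r) w = take (Suc j) p" using gp_take_drop(1)[OF p j(1)] j l by simp
    then have "r ! (length r - 2) \<in> set p" using A by (metis in_set_takeD)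
    then show False using y by blast
  qed
  moreover have "last r \<in> set r" using r0 by simp
  moreover have "last r \<in> set p" using p0 l by (metis hd_in_set)
  ultimately show ?thesis by blast
qed

end

context tr begin

lemma incident_W:
  assumes p: "is_path X E p"
  shows "(\<Prod>\<epsilon>\<in>incident_edges E p. q_path q \<epsilon> p) = W E q p"
proof -
  define S where "S u = {\<epsilon>\<in>E. u \<in> \<epsilon> \<and> \<epsilon> \<notin> set (path_edges p)}" for u
  have U: "incident_edges E p = (\<Union>u\<in>set p. S u)" unfolding incident_edges_def S_def by blast
  have fin: "\<forall>u\<in>set p. finite (S u)" unfolding S_def using finE by simp
  have uniq: "u' = u" if "u \<in> set p" "\<epsilon> \<in> S u" "u' \<in> set p" "u' \<in> \<epsilon>" for u u' \<epsilon>
  proof (rule ccontr)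
    assume ne: "u' \<noteq> u"
    have h: "\<epsilon> \<in> E" "u \<in> \<epsilon>" "\<epsilon> \<notin> set (path_edges p)" using that(2) unfolding S_def by auto
    have "\<epsilon> \<in> set (path_edges p)" by (rule both_in_path[OF p h(1) that(4) h(2) ne that(3) that(1)])
    then show False using h(3) by simp
  qed
  have disj: "\<forall>i\<in>set p. \<forall>j\<in>set p. i \<noteq> j \<longrightarrow> S i \<inter> S j = {}"
  proof (intro ballI impI)
    fix i j assume ij: "i \<in> set p" "j \<in> set p" "i \<noteq> j"
    show "S i \<inter> S j = {}"
    proof (rule ccontr)
      assume "S i \<inter> S j \<noteq> {}"
      then obtain e where e: "e \<in> S i" "e \<in> S j" by blast
      have "j \<in> e" using e(2) unfolding S_def by simp
      then show False using uniq[OF ij(1) e(1) ij(2)] ij(3) by simp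
    qed
  qed
  have "(\<Prod>\<epsilon>\<in>incident_edges E p. q_path q \<epsilon> p) = (\<Prod>u\<in>set p. \<Prod>\<epsilon>\<in>S u. q_path q \<epsilon> p)"
    unfolding U by (rule prod.UNION_disjoint[OF _ fin disj]) simp
  also have "\<dots> = (\<Prod>u\<in>set p. \<Prod>\<epsilon>\<in>S u. q \<epsilon> u)"
  proof (rule prod.cong[OF refl], rule prod.cong[OF refl])
    fix u \<epsilon> assume u: "u \<in> set p" and e: "\<epsilon> \<in> S u"
    have "u \<in> \<epsilon>" using e unfolding S_def by simp
    have "(SOME u'. u' \<in> set p \<and> u' \<in> \<epsilon>) = u"
    proof (rule some_equality)
      show "u \<in> set p \<and> u \<in> \<epsilon>" using u \<open>u \<in> \<epsilon>\<close> by simp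
      fix u' assume "u' \<in> set p \<and> u' \<in> \<epsilon>"
      then show "u' = u" using uniq[OF u e] by blast
    qed
    then show "q_path q \<epsilon> p = q \<epsilon> u" unfolding q_path_def by simp
  qed
  finally show ?thesis unfolding W_def S_def .
qed

lemma valency_edges:
  assumes p: "is_path X E p" and j: "0 < j" "j < length p - 1"
    and val: "valency E (p ! j) = 2" and e: "\<epsilon> \<in> E" "p ! j \<in> \<epsilon>"
  shows "\<epsilon> \<in> set (path_edges p)"
proof -
  let ?S = "{e \<in> E. p ! j \<in> e}"
  have d: "distinct (path_edges p)" "set (path_edges p) \<subseteq> E" using p unfolding is_path_def by auto
  have j1: "j - 1 < length (path_edges p)" "j < length (path_edges p)" using j by auto
  define e1 where "e1 = path_edges p ! (j - 1)"
  define e2 where "e2 = path_edges p ! j"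
  have E1: "e1 = {p ! (j - 1), p ! j}" unfolding e1_def using j by (simp add: path_edges_nth)
  have E2: "e2 = {p ! j, p ! Suc j}" unfolding e2_def using j by (simp add: path_edges_nth)
  have "e1 \<noteq> e2" unfolding e1_def e2_def using nth_eq_iff_index_eq[OF d(1) j1] j by simp
  moreover have m: "e1 \<in> set (path_edges p)" "e2 \<in> set (path_edges p)"
    unfolding e1_def e2_def using nth_mem[OF j1(1)] nth_mem[OF j1(2)] by blast+
  moreover have "e1 \<in> E" "e2 \<in> E" using m d(2) by blast+
  ultimately have in12: "e1 \<in> ?S" "e2 \<in> ?S" "e1 \<noteq> e2" unfolding E1 E2 by auto
  have "card ?S = 2" using val unfolding valency_def by simp
  then obtain a b where ab: "?S = {a, b}" unfolding card_2_iff by blast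
  have "e1 \<in> {a, b}" "e2 \<in> {a, b}" using in12(1,2) unfolding ab by simp_all
  then have ab2: "{a, b} = {e1, e2}" using in12(3) by auto
  have "\<epsilon> \<in> ?S" using e by simp
  then have "\<epsilon> \<in> {e1, e2}" unfolding ab ab2 .
  then show ?thesis using m by blast
qed

lemma factor:
  fixes q :: "'a set \<Rightarrow> 'a \<Rightarrow> int"
  assumes g: "lin g" and p: "is_path X E p" and h: "hd p = last g" and m: "set g \<inter> set p = {last g}"
  defines "n \<equiv> length g - 1"
  defines "en \<equiv> {g ! (n - 1), g ! n}"
  defines "Zf \<equiv> (\<lambda>u. \<Prod>\<epsilon>\<in>{\<epsilon>\<in>E. u \<in> \<epsilon> \<and> \<epsilon> \<notin> set (path_edges p) \<and> \<epsilon> \<noteq> en}. q \<epsilon> u)"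
  shows "W E q (g @ tl p) = bigQ E q {g ! 0, g ! 1} (g ! 0) * (\<Prod>u\<in>set p. Zf u)"
    and "W E q p = q en (g ! n) * (\<Prod>u\<in>set p. Zf u)"
proof -
  have gp': "is_path X E g" "length g \<ge> 2" and val: "\<And>i. 0 < i \<Longrightarrow> i < length g - 1 \<Longrightarrow> valency E (g ! i) = 2"
    using g unfolding lin_def by auto
  have dg: "distinct g" using path_distinct gp' by simp
  have g0: "g \<noteq> []" and p0: "p \<noteq> []" using gp' p unfolding is_path_def by auto
  have n1: "n \<ge> 1" "n < length g" unfolding n_def using gp' by auto
  have lg: "last g = g ! n" unfolding n_def using g0 by (simp add: last_conv_nth)
  have gidx: "\<And>i j. i < length g \<Longrightarrow> j < length g \<Longrightarrow> g ! i = g ! j \<longleftrightarrow> i = j"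
    using nth_eq_iff_index_eq[OF dg] by blast
  have PE: "path_edges (g @ tl p) = path_edges g @ path_edges p"
    by (rule path_edges_append[OF g0 p0 h[symmetric]])
  have hp: "hd p \<in> set g" using h g0 by simp
  have SP: "set (g @ tl p) = set g \<union> set p"
  proof -
    have "set p = insert (hd p) (set (tl p))" using p0 by (cases p) auto
    then show ?thesis using hp by auto
  qed
  have en_in: "en \<in> set (path_edges g)"
  proof -
    have sn: "Suc (n - 1) = n" using n1 by simp
    have "n - 1 < length g - 1" using n1 n_def by simp
    then have "path_edges g ! (n - 1) = en" unfolding en_def using path_edges_nth[of "n - 1" g] sn
      by simp
    moreover have "n - 1 < length (path_edges g)" using n1 by (simp add: n_def)
    ultimately show ?thesis by (metis nth_mem)
  qed
  have egE: "set (path_edges g) \<subseteq> E" using gp' unfolding is_path_def by simp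
  have epsub: "\<And>e u. e \<in> set (path_edges p) \<Longrightarrow> u \<in> e \<Longrightarrow> u \<in> set p"
    using edge_in_set by blast
  have egsub: "\<And>e u. e \<in> set (path_edges g) \<Longrightarrow> u \<in> e \<Longrightarrow> u \<in> set g"
    using edge_in_set by blast
  have mm: "\<And>u. u \<in> set g \<Longrightarrow> u \<in> set p \<Longrightarrow> u = g ! n" using m lg by auto
  have last_edge: "\<And>e. e \<in> set (path_edges g) \<Longrightarrow> g ! n \<in> e \<Longrightarrow> e = en"
  proof -
    fix e assume e: "e \<in> set (path_edges g)" "g ! n \<in> e"
    then obtain k where k: "k < length g - 1" "e = {g ! k, g ! Suc k}" unfolding set_path_edges by blast
    have "n = k \<or> n = Suc k" using distinct_edge_idx[OF dg k(1), of n] e(2) k(2) n1 by simp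
    then have "k = n - 1" using k(1) n_def by auto
    then show "e = en" unfolding en_def using k n1 by simp
  qed
  have first_edge: "\<And>e. e \<in> set (path_edges g) \<Longrightarrow> g ! 0 \<in> e \<Longrightarrow> e = {g ! 0, g ! 1}"
  proof -
    fix e assume e: "e \<in> set (path_edges g)" "g ! 0 \<in> e"
    then obtain k where k: "k < length g - 1" "e = {g ! k, g ! Suc k}" unfolding set_path_edges by blast
    have "0 = k \<or> 0 = Suc k" using distinct_edge_idx[OF dg k(1), of 0] e(2) k(2) g0 by simp
    then show "e = {g ! 0, g ! 1}" using k by auto
  qed
  have e01: "{g ! 0, g ! 1} \<in> set (path_edges g)"
  proof -
    have "path_edges g ! 0 = {g ! 0, g ! 1}" using gp' path_edges_nth[of 0 g] by simp
    moreover have "0 < length (path_edges g)" using gp' by simp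
    ultimately show ?thesis by (metis nth_mem)
  qed
  define F where "F u = (\<Prod>\<epsilon>\<in>{\<epsilon>\<in>E. u \<in> \<epsilon> \<and> \<epsilon> \<notin> set (path_edges g) \<union> set (path_edges p)}. q \<epsilon> u)" for u
  have W1: "W E q (g @ tl p) = (\<Prod>u\<in>set g \<union> set p. F u)"
    unfolding W_def F_def PE SP by simp
  have un: "set g \<union> set p = (set g - {g ! n}) \<union> set p" using m lg by auto
  have W2: "(\<Prod>u\<in>set g \<union> set p. F u) = (\<Prod>u\<in>set g - {g ! n}. F u) * (\<Prod>u\<in>set p. F u)"
    unfolding un by (rule prod.union_disjoint) (use mm in auto)
  have W3: "(\<Prod>u\<in>set p. F u) = (\<Prod>u\<in>set p. Zf u)"
  proof (rule prod.cong[OF refl])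
    fix u assume u: "u \<in> set p"
    have "{\<epsilon>\<in>E. u \<in> \<epsilon> \<and> \<epsilon> \<notin> set (path_edges g) \<union> set (path_edges p)}
        = {\<epsilon>\<in>E. u \<in> \<epsilon> \<and> \<epsilon> \<notin> set (path_edges p) \<and> \<epsilon> \<noteq> en}"
    proof (intro Collect_cong conj_cong refl iffI conjI)
      fix e assume e: "e \<in> E" "u \<in> e" "e \<notin> set (path_edges g) \<union> set (path_edges p)"
      show "e \<notin> set (path_edges p)" using e(3) by simp
      show "e \<noteq> en" using e(3) en_in by blast
    next
      fix e assume e: "e \<in> E" "u \<in> e" "e \<notin> set (path_edges p) \<and> e \<noteq> en"
      show "e \<notin> set (path_edges g) \<union> set (path_edges p)"
      proof
        assume "e \<in> set (path_edges g) \<union> set (path_edges p)"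
        then have eg: "e \<in> set (path_edges g)" using e(3) by simp
        then have "u = g ! n" using mm[OF egsub[OF eg e(2)] u] by simp
        then have "e = en" using last_edge[OF eg] e(2) by simp
        then show False using e(3) by simp
      qed
    qed
    then show "F u = Zf u" unfolding F_def Zf_def by simp
  qed
  have Fg: "F u = (\<Prod>\<epsilon>\<in>{\<epsilon>\<in>E. u \<in> \<epsilon> \<and> \<epsilon> \<notin> set (path_edges g)}. q \<epsilon> u)"
    if u: "u \<in> set g - {g ! n}" for u
  proof -
    have "{\<epsilon>\<in>E. u \<in> \<epsilon> \<and> \<epsilon> \<notin> set (path_edges g) \<union> set (path_edges p)}
        = {\<epsilon>\<in>E. u \<in> \<epsilon> \<and> \<epsilon> \<notin> set (path_edges g)}"
    proof (intro Collect_cong conj_cong refl iffI)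
      fix e assume e: "u \<in> e" "e \<notin> set (path_edges g)"
      show "e \<notin> set (path_edges g) \<union> set (path_edges p)"
      proof
        assume "e \<in> set (path_edges g) \<union> set (path_edges p)"
        then have "e \<in> set (path_edges p)" using e(2) by simp
        then have "u \<in> set p" using epsub e(1) by blast
        then show False using mm u by blast
      qed
    qed simp
    then show ?thesis unfolding F_def by simp
  qed
  have g0in: "g ! 0 \<in> set g - {g ! n}" using gidx[of 0 n] n1 g0 by simp
  have F0: "F (g ! 0) = bigQ E q {g ! 0, g ! 1} (g ! 0)"
  proof -
    have "{\<epsilon>\<in>E. g ! 0 \<in> \<epsilon> \<and> \<epsilon> \<notin> set (path_edges g)} = {e' \<in> E. g ! 0 \<in> e' \<and> e' \<noteq> {g ! 0, g ! 1}}"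
      using first_edge e01 by blast
    then show ?thesis unfolding Fg[OF g0in] bigQ_def by simp
  qed
  have Fi: "F u = 1" if u: "u \<in> set g - {g ! n} - {g ! 0}" for u
  proof -
    obtain i where i: "i < length g" "u = g ! i" using u by (auto simp: in_set_conv_nth)
    have "u \<noteq> g ! 0" "u \<noteq> g ! n" using u by auto
    then have "i \<noteq> 0" "i \<noteq> n" using i(2) by metis+
    then have i2: "0 < i" "i < length g - 1" using i n_def by auto
    have emp: "{\<epsilon>\<in>E. u \<in> \<epsilon> \<and> \<epsilon> \<notin> set (path_edges g)} = {}"
      using valency_edges[OF gp'(1) i2 val[OF i2]] i(2) by blast
    show ?thesis by (simp only: Fg[OF DiffD1[OF u]] emp prod.empty)
  qed
  have "(\<Prod>u\<in>set g - {g ! n}. F u) = F (g ! 0) * (\<Prod>u\<in>set g - {g ! n} - {g ! 0}. F u)"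
    by (rule prod.remove[OF _ g0in]) simp
  also have "\<dots> = F (g ! 0)" using Fi by simp
  finally have W4: "(\<Prod>u\<in>set g - {g ! n}. F u) = bigQ E q {g ! 0, g ! 1} (g ! 0)" using F0 by simp
  show "W E q (g @ tl p) = bigQ E q {g ! 0, g ! 1} (g ! 0) * (\<Prod>u\<in>set p. Zf u)"
    using W1 W2 W3 W4 by simp
  define G where "G u = (\<Prod>\<epsilon>\<in>{\<epsilon>\<in>E. u \<in> \<epsilon> \<and> \<epsilon> \<notin> set (path_edges p)}. q \<epsilon> u)" for u
  have bp: "g ! n \<in> set p" using h p0 lg by (metis hd_in_set)
  have gn1: "g ! (n - 1) \<in> set g" using n1 by simp
  have gn1p: "g ! (n - 1) \<notin> set p"
  proof
    assume "g ! (n - 1) \<in> set p"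
    then have "g ! (n - 1) = g ! n" using mm gn1 by blast
    moreover have "n - 1 < length g" using n1 by simp
    ultimately have "n - 1 = n" using gidx[of "n - 1" n] n1(2) by blast
    then show False using n1 by simp
  qed
  have GZ: "G u = Zf u" if u: "u \<in> set p - {g ! n}" for u
  proof -
    have "u \<notin> en"
    proof
      assume "u \<in> en"
      then have "u = g ! (n - 1) \<or> u = g ! n" unfolding en_def by simp
      then show False using u gn1p by auto
    qed
    then have "{\<epsilon>\<in>E. u \<in> \<epsilon> \<and> \<epsilon> \<notin> set (path_edges p)} = {\<epsilon>\<in>E. u \<in> \<epsilon> \<and> \<epsilon> \<notin> set (path_edges p) \<and> \<epsilon> \<noteq> en}"
      by blast
    then show ?thesis unfolding G_def Zf_def by simp
  qed
  have enE: "en \<in> E" using en_in egE by blast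
  have en_notp: "en \<notin> set (path_edges p)"
  proof
    assume "en \<in> set (path_edges p)"
    then have "g ! (n - 1) \<in> set p" using epsub unfolding en_def by blast
    then show False using gn1p by simp
  qed
  have Gb: "G (g ! n) = q en (g ! n) * Zf (g ! n)"
  proof -
    have "{\<epsilon>\<in>E. g ! n \<in> \<epsilon> \<and> \<epsilon> \<notin> set (path_edges p)} = insert en {\<epsilon>\<in>E. g ! n \<in> \<epsilon> \<and> \<epsilon> \<notin> set (path_edges p) \<and> \<epsilon> \<noteq> en}"
      using enE en_notp unfolding en_def by blast
    then show ?thesis unfolding G_def Zf_def using finE by simp
  qed
  have "W E q p = (\<Prod>u\<in>set p. G u)" unfolding W_def G_def by simp
  also have "\<dots> = G (g ! n) * (\<Prod>u\<in>set p - {g ! n}. G u)"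
    by (rule prod.remove[OF _ bp]) simp
  also have "\<dots> = q en (g ! n) * (Zf (g ! n) * (\<Prod>u\<in>set p - {g ! n}. Zf u))"
    using GZ Gb by simp
  also have "Zf (g ! n) * (\<Prod>u\<in>set p - {g ! n}. Zf u) = (\<Prod>u\<in>set p. Zf u)"
    by (rule prod.remove[OF _ bp, symmetric]) simp
  finally show "W E q p = q en (g ! n) * (\<Prod>u\<in>set p. Zf u)" .
qed

end

lemma (in tr) last_edge_gen:
  assumes p: "is_path X E p" and e: "e \<in> set (path_edges p)" "last p \<in> e"
  shows "e = {p ! (length p - 2), last p}"
proof -
  have dp: "distinct p" using path_distinct p by simp
  have p0: "p \<noteq> []" using p unfolding is_path_def by simp
  obtain k where k: "k < length p - 1" "e = {p ! k, p ! Suc k}" using e(1) unfolding set_path_edges by blast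
  have lp: "last p = p ! (length p - 1)" using p0 by (simp add: last_conv_nth)
  have "length p - 1 = k \<or> length p - 1 = Suc k"
    using distinct_edge_idx[OF dp k(1), of "length p - 1"] e(2) k(2) lp p0 by simp
  then have "k = length p - 2" using k(1) by auto
  moreover have "Suc (length p - 2) = length p - 1" using k(1) by simp
  ultimately show ?thesis using k(2) lp by simp
qed

locale setting =
  fixes V A :: "'a set" and E :: "'a set set" and f :: "'a \<Rightarrow> int"
    and q :: "'a set \<Rightarrow> 'a \<Rightarrow> int" and v0 v v' :: 'a
  assumes dr: "decorated_rooted_tree V A E f q v0"
    and nd: "negative_determinants V E q"
    and fpos: "\<forall>\<alpha>\<in>A. f \<alpha> \<ge> 0"
    and vV: "v \<in> V" and v'V: "v' \<in> V"
    and lt: "tree_less V A E v0 v v'"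
    and lin0: "linear_path E (gpath (V \<union> A) E v v')"

sublocale setting \<subseteq> tr "V \<union> A" E
  using dr unfolding decorated_rooted_tree_def decorated_tree_def by unfold_locales simp

context setting begin

abbreviation "X \<equiv> V \<union> A"
abbreviation "g \<equiv> gpath X E v v'"
abbreviation "n \<equiv> length g - 1"
abbreviation "r \<equiv> gpath X E v0 v'"
abbreviation "P \<equiv> gpath X E v0 v"

lemma dt: "decorated_tree V A E f q" and root: "is_root V A E q v0"
  using dr unfolding decorated_rooted_tree_def by auto

lemma VA: "V \<inter> A = {}" and arrow_val: "\<And>a. a \<in> A \<Longrightarrow> valency E a = 1"
  and arrow_q: "\<And>e a. e \<in> E \<Longrightarrow> a \<in> A \<Longrightarrow> a \<in> e \<Longrightarrow> q e a = 1"
  using dt unfolding decorated_tree_def by auto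

lemma v0V: "v0 \<in> V" and v0q: "\<And>e. e \<in> E \<Longrightarrow> v0 \<in> e \<Longrightarrow> q e v0 = 1"
  and rootq: "\<And>u e. u \<in> V - {v0} \<Longrightarrow> e \<in> E \<Longrightarrow> u \<in> e \<Longrightarrow>
      e \<notin> set (path_edges (gpath X E v0 u)) \<Longrightarrow> q e u \<ge> 1"
  using root unfolding is_root_def by auto

lemma vX: "v \<in> X" "v' \<in> X" "v0 \<in> X" using vV v'V v0V by auto

lemma g_path: "is_path X E g" "hd g = v" "last g = v'" using gp[OF vX(1,2)] by auto
lemma r_path: "is_path X E r" "hd r = v0" "last r = v'" using gp[OF vX(3,2)] by auto
lemma P_path: "is_path X E P" "hd P = v0" "last P = v" using gp[OF vX(3,1)] by auto

lemma g_lin: "lin g"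
  using lin0 g_path unfolding linear_path_def lin_def by auto

lemma g_len: "length g \<ge> 2" using lin0 unfolding linear_path_def by simp
lemma g_dist: "distinct g" using path_distinct g_path by simp
lemma g_ne: "g \<noteq> []" using g_len by auto
lemma g0: "g ! 0 = v" using g_path g_ne by (simp add: hd_conv_nth)
lemma gn: "g ! n = v'" using g_path g_ne by (simp add: last_conv_nth)
lemma n1: "n \<ge> 1" using g_len by simp
lemma gidx: "i < length g \<Longrightarrow> j < length g \<Longrightarrow> g ! i = g ! j \<longleftrightarrow> i = j"
  using nth_eq_iff_index_eq[OF g_dist] by blast

lemma v_in_r: "v \<in> set r" and vv': "v \<noteq> v'"
  using lt unfolding tree_less_def by auto

lemma v'_ne_v0: "v' \<noteq> v0"
proof
  assume "v' = v0"
  then have "r = [v0]" using gp_refl vX by simp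
  then show False using v_in_r vv' \<open>v' = v0\<close> by simp
qed

lemma r_split: "r = P @ tl g"
  using gp_split[OF r_path(1) v_in_r] r_path by simp

lemma r_dist: "distinct r" using path_distinct r_path by simp

lemma r_eq: "r = butlast P @ g"
proof -
  have "P \<noteq> []" using P_path unfolding is_path_def by simp
  then have "P = butlast P @ [v]" using P_path by (metis append_butlast_last_id)
  moreover have "g = v # tl g" using g_ne g_path by (metis list.collapse)
  ultimately show ?thesis using r_split by (metis append.assoc append_Cons append_Nil)
qed

lemma r_len: "length r \<ge> 2" using r_eq g_len by simp

lemma r_last2: "r ! (length r - 2) = g ! (n - 1)"
proof -
  have L: "length r = length (butlast P) + length g" using r_eq by (metis length_append)
  have k: "length r - 2 = length (butlast P) + (n - 1)" using L g_len by simp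
  have "r ! (length r - 2) = (butlast P @ g) ! (length (butlast P) + (n - 1))"
    unfolding k using r_eq by simp
  also have "\<dots> = g ! (n - 1)" by (rule nth_append_length_plus)
  finally show ?thesis .
qed

lemma set_g_r: "set g \<subseteq> set r"
  using r_eq by simp

lemma g_V: "i \<le> n \<Longrightarrow> g ! i \<in> V"
proof -
  assume i: "i \<le> n"
  show "g ! i \<in> V"
  proof (cases "i = 0 \<or> i = n")
    case True then show ?thesis using g0 gn vV v'V by auto
  next
    case False
    then have "valency E (g ! i) = 2" using g_lin i unfolding lin_def by auto
    moreover have "g ! i \<in> set g" using i g_len by simp
    then have "g ! i \<in> X" using g_path(1) unfolding is_path_def by blast
    ultimately show ?thesis using arrow_val by fastforce
  qed
qed

lemma s_pos: assumes i: "i < n" shows "q {g ! i, g ! Suc i} (g ! i) \<ge> 1"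
proof -
  have giV: "g ! i \<in> V" using g_V i by simp
  have eE: "{g ! i, g ! Suc i} \<in> E" using is_path_edge[OF g_path(1)] i by simp
  show ?thesis
  proof (cases "g ! i = v0")
    case True then show ?thesis using v0q[OF eE] by simp
  next
    case False
    have "g ! i \<in> set g" using i by simp
    then have gir: "g ! i \<in> set r" using set_g_r by blast
    have sp: "r = gpath X E v0 (g ! i) @ tl (gpath X E (g ! i) v')"
      using gp_split[OF r_path(1) gir] r_path by simp
    have "gpath X E (g ! i) v' = drop i g" using gp_take_drop(2)[OF g_path(1), of i] i g_path by simp
    then have tl: "tl (gpath X E (g ! i) v') = drop (Suc i) g" by (simp add: tl_drop drop_Suc)
    have si: "Suc i < length g" using i by simp
    then have "drop (Suc i) g \<noteq> []" by simp
    then have "hd (drop (Suc i) g) \<in> set (drop (Suc i) g)" by (rule hd_in_set)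
    then have gsi: "g ! Suc i \<in> set (drop (Suc i) g)" using hd_drop_conv_nth[OF si] by simp
    have "distinct (gpath X E v0 (g ! i) @ tl (gpath X E (g ! i) v'))"
      by (subst sp[symmetric]) (rule r_dist)
    then have "set (gpath X E v0 (g ! i)) \<inter> set (drop (Suc i) g) = {}"
      unfolding tl distinct_append by blast
    then have notin: "g ! Suc i \<notin> set (gpath X E v0 (g ! i))" using gsi by blast
    have "{g ! i, g ! Suc i} \<notin> set (path_edges (gpath X E v0 (g ! i)))"
    proof
      assume "{g ! i, g ! Suc i} \<in> set (path_edges (gpath X E v0 (g ! i)))"
      then have "{g ! i, g ! Suc i} \<subseteq> set (gpath X E v0 (g ! i))" by (rule edge_in_set)
      then show False using notin by simp
    qed
    then show ?thesis using rootq[of "g ! i" "{g ! i, g ! Suc i}"] giV False eE by simp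
  qed
qed

lemma Q'_pos: "bigQ E q {g ! (n - 1), g ! n} v' > 0"
  unfolding bigQ_def
proof (rule prod_pos)
  fix e assume e: "e \<in> {e' \<in> E. v' \<in> e' \<and> e' \<noteq> {g ! (n - 1), g ! n}}"
  have "e \<notin> set (path_edges r)"
  proof
    assume "e \<in> set (path_edges r)"
    then have "e = {r ! (length r - 2), last r}" using last_edge_gen[OF r_path(1)] e r_path by simp
    then have "e = {g ! (n - 1), g ! n}" using r_last2 r_path gn by simp
    then show False using e by simp
  qed
  then show "0 < q e v'" using rootq[of v' e] v'V v'_ne_v0 e by force
qed

lemma int_edges:
  assumes i: "0 < i" "i < n"
  shows "{e \<in> E. g ! i \<in> e} = {{g ! (i - 1), g ! i}, {g ! i, g ! Suc i}}"
    and "{g ! (i - 1), g ! i} \<noteq> {g ! i, g ! Suc i}"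
proof -
  have val: "valency E (g ! i) = 2" using g_lin i unfolding lin_def by auto
  have e1: "{g ! (i - 1), g ! i} \<in> E" using is_path_edge[OF g_path(1), of "i - 1"] i by simp
  have e2: "{g ! i, g ! Suc i} \<in> E" using is_path_edge[OF g_path(1), of i] i by simp
  have "e \<in> {{g ! (i - 1), g ! i}, {g ! i, g ! Suc i}}" if e: "e \<in> E" "g ! i \<in> e" for e
  proof -
    have "e \<in> set (path_edges g)" using valency_edges[OF g_path(1) _ _ val e] i by simp
    then obtain k where k: "k < length g - 1" "e = {g ! k, g ! Suc k}" unfolding set_path_edges by blast
    have "i = k \<or> i = Suc k" using distinct_edge_idx[OF g_dist k(1), of i] e(2) k(2) i by simp
    then show ?thesis using k(2) by auto
  qed
  then show "{e \<in> E. g ! i \<in> e} = {{g ! (i - 1), g ! i}, {g ! i, g ! Suc i}}" using e1 e2 by blast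
  have "g ! (i - 1) \<noteq> g ! Suc i" using gidx[of "i - 1" "Suc i"] i by simp
  moreover have "g ! (i - 1) \<noteq> g ! i" using gidx[of "i - 1" i] i by simp
  ultimately show "{g ! (i - 1), g ! i} \<noteq> {g ! i, g ! Suc i}" by (auto simp: doubleton_eq_iff)
qed

lemma int_bigQ:
  assumes i: "0 < i" "i < n"
  shows "bigQ E q {g ! (i - 1), g ! i} (g ! i) = q {g ! i, g ! Suc i} (g ! i)"
    and "bigQ E q {g ! i, g ! Suc i} (g ! i) = q {g ! (i - 1), g ! i} (g ! i)"
proof -
  note ie = int_edges[OF i]
  have "{e' \<in> E. g ! i \<in> e' \<and> e' \<noteq> {g ! (i - 1), g ! i}} = {{g ! i, g ! Suc i}}"
    using ie by blast
  then show "bigQ E q {g ! (i - 1), g ! i} (g ! i) = q {g ! i, g ! Suc i} (g ! i)"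
    unfolding bigQ_def by simp
  have "{e' \<in> E. g ! i \<in> e' \<and> e' \<noteq> {g ! i, g ! Suc i}} = {{g ! (i - 1), g ! i}}"
    using ie by blast
  then show "bigQ E q {g ! i, g ! Suc i} (g ! i) = q {g ! (i - 1), g ! i} (g ! i)"
    unfolding bigQ_def by simp
qed

end

lemma arith1:
  fixes s qq Bn Tn T Qv :: int
  assumes "s > 0" "qq > 0" "Bn > 0" "s * Tn < T * Bn" "qq * T < Qv * s"
  shows "qq * Tn < Qv * Bn"
proof -
  have "s * (qq * Tn) = qq * (s * Tn)" by simp
  also have "\<dots> < qq * (T * Bn)" using assms by (intro mult_strict_left_mono) auto
  also have "\<dots> = (qq * T) * Bn" by simp
  also have "\<dots> < (Qv * s) * Bn" using assms by (intro mult_strict_right_mono) auto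
  also have "\<dots> = s * (Qv * Bn)" by simp
  finally show ?thesis using assms(1) by simp
qed

context setting begin

lemma det_edge: assumes i: "i < n"
  shows "q {g ! i, g ! Suc i} (g ! i) * q {g ! i, g ! Suc i} (g ! Suc i)
         - bigQ E q {g ! i, g ! Suc i} (g ! i) * bigQ E q {g ! i, g ! Suc i} (g ! Suc i) < 0"
proof -
  have "g ! i \<in> V" "g ! Suc i \<in> V" using g_V i by auto
  moreover have "{g ! i, g ! Suc i} \<in> E" using is_path_edge[OF g_path(1)] i by simp
  ultimately have "edge_det E q (g ! i) (g ! Suc i) < 0" using nd unfolding negative_determinants_def by blast
  then show ?thesis unfolding edge_det_def .
qed

lemma chain:
  assumes "1 \<le> i" "i \<le> n"
  shows "q {g ! 0, g ! 1} v * q {g ! (i - 1), g ! i} (g ! i)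
         < bigQ E q {g ! 0, g ! 1} v * bigQ E q {g ! (i - 1), g ! i} (g ! i)"
  using assms
proof (induction i rule: dec_induct)
  case base
  show ?case using det_edge[of 0] n1 g0 by simp
next
  case (step i)
  have i: "0 < i" "i < n" using step by auto
  define T where "T = q {g ! i, g ! Suc i} (g ! i)"
  define s where "s = q {g ! i, g ! Suc i} (g ! i)"
  have d: "s * q {g ! i, g ! Suc i} (g ! Suc i) - q {g ! (i - 1), g ! i} (g ! i) * bigQ E q {g ! i, g ! Suc i} (g ! Suc i) < 0"
    using det_edge[OF i(2)] int_bigQ(2)[OF i] unfolding s_def by simp
  have IH: "q {g ! 0, g ! 1} v * q {g ! (i - 1), g ! i} (g ! i) < bigQ E q {g ! 0, g ! 1} v * s"
    using step.IH[OF less_imp_le[OF i(2)]] int_bigQ(1)[OF i] unfolding s_def by simp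
  have spos: "s > 0" using s_pos[OF i(2)] unfolding s_def by simp
  have "0 < n" using n1 by simp
  then have qqpos: "q {g ! 0, g ! 1} v > 0" using s_pos[of 0] g0 by simp
  have Bpos: "bigQ E q {g ! i, g ! Suc i} (g ! Suc i) > 0"
  proof (cases "Suc i < n")
    case True
    then have "bigQ E q {g ! (Suc i - 1), g ! Suc i} (g ! Suc i) = q {g ! Suc i, g ! Suc (Suc i)} (g ! Suc i)"
      using int_bigQ(1)[of "Suc i"] by simp
    then show ?thesis using s_pos[OF True] by simp
  next
    case False
    then have "Suc i = n" using i by simp
    then show ?thesis using Q'_pos gn by (metis diff_Suc_1)
  qed
  have "q {g ! 0, g ! 1} v * q {g ! i, g ! Suc i} (g ! Suc i) < bigQ E q {g ! 0, g ! 1} v * bigQ E q {g ! i, g ! Suc i} (g ! Suc i)"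
    by (rule arith1[OF spos qqpos Bpos _ IH]) (use d in simp)
  then show ?case by simp
qed

lemma chain_n: "q {g ! 0, g ! 1} v * q {g ! (n - 1), g ! n} v' < bigQ E q {g ! 0, g ! 1} v * bigQ E q {g ! (n - 1), g ! n} v'"
  using chain[of n] n1 gn by simp

end
context setting begin

abbreviation "en \<equiv> {g ! (n - 1), g ! n}"

lemma alpha_basic:
  assumes a: "\<alpha> \<in> A"
  shows "\<alpha> \<in> X" "\<alpha> \<notin> set g" "\<alpha> \<noteq> v'" "\<alpha> \<noteq> v"
proof -
  show "\<alpha> \<in> X" using a by simp
  show ng: "\<alpha> \<notin> set g"
  proof
    assume "\<alpha> \<in> set g"
    then obtain i where "i < length g" "\<alpha> = g ! i" by (metis in_set_conv_nth)
    then have "\<alpha> \<in> V" using g_V by simp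
    then show False using a VA by blast
  qed
  show "\<alpha> \<noteq> v'" using a VA v'V by blast
  show "\<alpha> \<noteq> v" using a VA vV by blast
qed

lemma tl_ne: assumes a: "\<alpha> \<in> A" shows "tl (gpath X E v' \<alpha>) \<noteq> []"
proof
  assume t: "tl (gpath X E v' \<alpha>) = []"
  have ps: "is_path X E (gpath X E v' \<alpha>)" "hd (gpath X E v' \<alpha>) = v'" "last (gpath X E v' \<alpha>) = \<alpha>"
    using gp[OF vX(2) alpha_basic(1)[OF a]] by auto
  have "gpath X E v' \<alpha> \<noteq> []" using ps unfolding is_path_def by simp
  then have "gpath X E v' \<alpha> = [v']" using t ps by (metis list.collapse)
  then show False using ps alpha_basic(3)[OF a] by simp
qed

lemma last_cat: "xs \<noteq> [] \<Longrightarrow> tl ys \<noteq> [] \<Longrightarrow> last (xs @ tl ys) = last ys"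
  by (cases ys) auto

lemma Zfac:
  assumes a: "\<alpha> \<in> A" and c1: "g ! (n - 1) \<notin> set (gpath X E v' \<alpha>)"
    and u: "u \<in> set (gpath X E v' \<alpha>)" and e: "\<epsilon> \<in> E" "u \<in> \<epsilon>"
    "\<epsilon> \<notin> set (path_edges (gpath X E v' \<alpha>))" "\<epsilon> \<noteq> en"
  shows "q \<epsilon> u \<ge> 1"
proof -
  let ?p = "gpath X E v' \<alpha>"
  have ps: "is_path X E ?p" "hd ?p = v'" "last ?p = \<alpha>"
    using gp[OF vX(2) alpha_basic(1)[OF a]] by auto
  have m2: "set r \<inter> set ?p = {v'}"
    using meet_one[OF r_path(1) ps(1) _ r_len] r_path ps r_last2 c1 by simp
  have r0: "r \<noteq> []" using r_path unfolding is_path_def by simp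
  have Rp: "is_path X E (r @ tl ?p)" using path_concat[OF r_path(1) ps(1)] r_path ps m2 by simp
  have Rl: "last (r @ tl ?p) = \<alpha>" using last_cat[OF r0 tl_ne[OF a]] ps by simp
  have Rh: "hd (r @ tl ?p) = v0" using r0 r_path by simp
  have R: "gpath X E v0 \<alpha> = r @ tl ?p" using gp_unique[OF Rp] Rl Rh by simp
  have uX: "u \<in> X" using u ps unfolding is_path_def by blast
  show ?thesis
  proof (cases "u \<in> A")
    case True then show ?thesis using arrow_q e by simp
  next
    case False
    then have uV: "u \<in> V" using uX by simp
    have v0r: "v0 \<in> set r" using r_path r0 by (metis hd_in_set)
    have un0: "u \<noteq> v0"
    proof
      assume "u = v0"
      then have "v0 \<in> set r \<inter> set ?p" using v0r u by simp
      then show False using m2 v'_ne_v0 by simp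
    qed
    have p0: "?p \<noteq> []" using ps unfolding is_path_def by simp
    have setp: "set ?p \<subseteq> set (r @ tl ?p)"
    proof -
      have "set ?p = insert (hd ?p) (set (tl ?p))" using p0 by (cases ?p) auto
      moreover have "hd ?p \<in> set r" using ps r_path r0 by (metis last_in_set)
      ultimately show ?thesis by auto
    qed
    have uR: "u \<in> set (r @ tl ?p)" using u setp by blast
    have spl: "r @ tl ?p = gpath X E v0 u @ tl (gpath X E u \<alpha>)"
      using gp_split[OF Rp uR] Rl Rh by simp
    have q1: "is_path X E (gpath X E v0 u)" "last (gpath X E v0 u) = u"
      using gp[OF vX(3) uX] by auto
    have q2: "is_path X E (gpath X E u \<alpha>)" "hd (gpath X E u \<alpha>) = u"
      using gp[OF uX alpha_basic(1)[OF a]] by auto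
    have ne1: "gpath X E v0 u \<noteq> []" "gpath X E u \<alpha> \<noteq> []" using q1 q2 unfolding is_path_def by auto
    have E1: "path_edges (r @ tl ?p) = path_edges (gpath X E v0 u) @ path_edges (gpath X E u \<alpha>)"
      unfolding spl by (rule path_edges_append[OF ne1]) (use q1 q2 in simp)
    have E2: "path_edges (r @ tl ?p) = path_edges r @ path_edges ?p"
      by (rule path_edges_append[OF r0 p0]) (use r_path ps in simp)
    have "\<epsilon> \<notin> set (path_edges (gpath X E v0 u))"
    proof
      assume "\<epsilon> \<in> set (path_edges (gpath X E v0 u))"
      then have "\<epsilon> \<in> set (path_edges (r @ tl ?p))" unfolding E1 by simp
      then have er: "\<epsilon> \<in> set (path_edges r)" using e(3) unfolding E2 by simp
      then have "u \<in> set r" using edge_in_set e(2) by blast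
      then have "u = v'" using m2 u by blast
      then have "\<epsilon> = {r ! (length r - 2), last r}" using last_edge_gen[OF r_path(1) er] e(2) r_path by simp
      then have "\<epsilon> = en" using r_last2 r_path gn by simp
      then show False using e(4) by simp
    qed
    then show ?thesis using rootq[of u \<epsilon>] uV un0 e by simp
  qed
qed

end
context setting begin

abbreviation "qq \<equiv> q {g ! 0, g ! 1} v"
abbreviation "Qp \<equiv> bigQ E q {g ! (n - 1), g ! n} v'"
abbreviation "Qv \<equiv> bigQ E q {g ! 0, g ! 1} v"

lemma xva: "\<alpha> \<in> A \<Longrightarrow> w \<in> X \<Longrightarrow> x_va V A E f q w \<alpha> = f \<alpha> * W E q (gpath X E w \<alpha>)"
  unfolding x_va_def using incident_W gp by simp

lemma strict_case:
  assumes a: "\<alpha> \<in> A" and t: "tree_less V A E v0 v' \<alpha>"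
  shows "g ! (n - 1) \<notin> set (gpath X E v' \<alpha>)"
proof
  assume c: "g ! (n - 1) \<in> set (gpath X E v' \<alpha>)"
  let ?p = "gpath X E v' \<alpha>"
  have ps: "is_path X E ?p" "hd ?p = v'" "last ?p = \<alpha>"
    using gp[OF vX(2) alpha_basic(1)[OF a]] by auto
  have R: "is_path X E (gpath X E v0 \<alpha>)" "hd (gpath X E v0 \<alpha>) = v0" "last (gpath X E v0 \<alpha>) = \<alpha>"
    using gp[OF vX(3) alpha_basic(1)[OF a]] by auto
  have "v' \<in> set (gpath X E v0 \<alpha>)" using t unfolding tree_less_def by simp
  then have spl: "gpath X E v0 \<alpha> = r @ tl ?p" using gp_split[OF R(1)] R by simp
  have "distinct (r @ tl ?p)" by (subst spl[symmetric]) (rule path_distinct[OF R(1)])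
  then have dj: "set r \<inter> set (tl ?p) = {}" by simp
  have "g ! (n - 1) \<in> set g" using n1 by simp
  then have inr: "g ! (n - 1) \<in> set r" using set_g_r by blast
  have "g ! (n - 1) \<noteq> v'" using gidx[of "n - 1" n] n1 gn by simp
  moreover have p0: "?p \<noteq> []" using ps unfolding is_path_def by simp
  moreover have "set ?p = insert (hd ?p) (set (tl ?p))" using p0 by (metis list.collapse list.simps(15))
  ultimately have "g ! (n - 1) \<in> set (tl ?p)" using c ps(2) by auto
  then show False using dj inr by blast
qed

lemma per_alpha:
  assumes a: "\<alpha> \<in> A"
  shows "qq * x_va V A E f q v' \<alpha> - Qp * x_va V A E f q v \<alpha> \<le> 0"
    and "f \<alpha> > 0 \<Longrightarrow> tree_less V A E v0 v' \<alpha> \<Longrightarrow> qq * x_va V A E f q v' \<alpha> - Qp * x_va V A E f q v \<alpha> < 0"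
proof -
  let ?p = "gpath X E v' \<alpha>"
  let ?pp = "gpath X E v \<alpha>"
  have ps: "is_path X E ?p" "hd ?p = v'" "last ?p = \<alpha>"
    using gp[OF vX(2) alpha_basic(1)[OF a]] by auto
  have pps: "is_path X E ?pp" "hd ?pp = v" "last ?pp = \<alpha>"
    using gp[OF vX(1) alpha_basic(1)[OF a]] by auto
  have fa: "f \<alpha> \<ge> 0" using fpos a by simp
  have neg: "qq * q en v' - Qv * Qp < 0" using chain_n by simp
  have case1: "qq * x_va V A E f q v' \<alpha> - Qp * x_va V A E f q v \<alpha> \<le> 0 \<and>
      (f \<alpha> > 0 \<longrightarrow> qq * x_va V A E f q v' \<alpha> - Qp * x_va V A E f q v \<alpha> < 0)"
    if c1: "g ! (n - 1) \<notin> set ?p"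
  proof -
    have m1: "set g \<inter> set ?p = {last g}"
    proof (rule meet_one[OF g_path(1) ps(1)])
      show "last g = hd ?p" using g_path ps by simp
      show "2 \<le> length g" by (rule g_len)
      have "length g - 2 = n - 1" by simp
      then show "g ! (length g - 2) \<notin> set ?p" using c1 by metis
    qed
    have cat: "is_path X E (g @ tl ?p)" using path_concat[OF g_path(1) ps(1)] g_path ps m1 by simp
    have "last (g @ tl ?p) = \<alpha>" using last_cat[OF g_ne tl_ne[OF a]] ps by simp
    moreover have "hd (g @ tl ?p) = v" using g_ne g_path by simp
    ultimately have gpp: "?pp = g @ tl ?p" using gp_unique[OF cat] by simp
    define Z where "Z = (\<Prod>u\<in>set ?p. \<Prod>\<epsilon>\<in>{\<epsilon>\<in>E. u \<in> \<epsilon> \<and> \<epsilon> \<notin> set (path_edges ?p) \<and> \<epsilon> \<noteq> en}. q \<epsilon> u)"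
    have fac: "W E q (g @ tl ?p) = Qv * Z" "W E q ?p = q en v' * Z"
      using factor[OF g_lin ps(1) _ m1, of q] g_path ps g0 gn unfolding Z_def by simp_all
    have Z1: "Z \<ge> 1" unfolding Z_def
    proof (intro prod_ge_1 ballI)
      fix u \<epsilon> assume u: "u \<in> set ?p" and e: "\<epsilon> \<in> {\<epsilon>\<in>E. u \<in> \<epsilon> \<and> \<epsilon> \<notin> set (path_edges ?p) \<and> \<epsilon> \<noteq> en}"
      show "1 \<le> q \<epsilon> u" using Zfac[OF a c1 u] e by simp
    qed
    have xv: "x_va V A E f q v \<alpha> = f \<alpha> * (Qv * Z)" using xva[OF a vX(1)] gpp fac by simp
    have xv': "x_va V A E f q v' \<alpha> = f \<alpha> * (q en v' * Z)" using xva[OF a vX(2)] fac by simp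
    have eq: "qq * x_va V A E f q v' \<alpha> - Qp * x_va V A E f q v \<alpha> = (f \<alpha> * Z) * (qq * q en v' - Qv * Qp)"
      unfolding xv xv' by (simp add: algebra_simps)
    have fz: "f \<alpha> * Z \<ge> 0" using fa Z1 by simp
    show ?thesis
    proof
      show "qq * x_va V A E f q v' \<alpha> - Qp * x_va V A E f q v \<alpha> \<le> 0"
        unfolding eq using fz neg by (simp add: mult_nonneg_nonpos)
      show "f \<alpha> > 0 \<longrightarrow> qq * x_va V A E f q v' \<alpha> - Qp * x_va V A E f q v \<alpha> < 0"
      proof
        assume "f \<alpha> > 0"
        then have "f \<alpha> * Z > 0" using Z1 by simp
        then show "qq * x_va V A E f q v' \<alpha> - Qp * x_va V A E f q v \<alpha> < 0"
          unfolding eq using neg by (simp add: mult_pos_neg)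
      qed
    qed
  qed
  have case2: "qq * x_va V A E f q v' \<alpha> - Qp * x_va V A E f q v \<alpha> = 0"
    if c2: "g ! (n - 1) \<in> set ?p"
  proof -
    have rg: "lin (rev g)" using lin_rev[OF g_lin] .
    have r1: "rev g ! 1 = g ! (n - 1)" using g_len by (simp add: rev_nth)
    have "last (rev g) \<in> set ?p"
    proof (rule lin_propagate[OF rg ps(1)])
      show "hd ?p = hd (rev g)" using ps g_path g_ne by (simp add: hd_rev)
      show "rev g ! 1 \<in> set ?p" using r1 c2 by simp
      show "\<forall>i. 0 < i \<and> i < length (rev g) - 1 \<longrightarrow> last ?p \<noteq> rev g ! i"
      proof (intro allI impI)
        fix i assume "0 < i \<and> i < length (rev g) - 1"
        then have "i < length (rev g)" by auto
        then have "rev g ! i \<in> set (rev g)" by (rule nth_mem)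
        then have "rev g ! i \<in> set g" by simp
        then show "last ?p \<noteq> rev g ! i" using ps(3) alpha_basic(2)[OF a] by metis
      qed
    qed
    then have vp: "v \<in> set ?p" using g_path g_ne by (simp add: last_rev)
    have spl: "?p = rev g @ tl ?pp"
      using gp_split[OF ps(1) vp] ps gp_rev[OF vX(1,2)] by simp
    have "distinct (rev g @ tl ?pp)" by (subst spl[symmetric]) (rule path_distinct[OF ps(1)])
    then have dj: "set g \<inter> set (tl ?pp) = {}" by simp
    have pp0: "?pp \<noteq> []" using pps unfolding is_path_def by simp
    have "set ?pp = insert v (set (tl ?pp))" using pp0 pps by (cases ?pp) auto
    moreover have "v \<in> set g" using g_path g_ne by (metis hd_in_set)
    ultimately have m3: "set (rev g) \<inter> set ?pp = {last (rev g)}" using dj g_path g_ne by (auto simp: last_rev)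
    define Z where "Z = (\<Prod>u\<in>set ?pp. \<Prod>\<epsilon>\<in>{\<epsilon>\<in>E. u \<in> \<epsilon> \<and> \<epsilon> \<notin> set (path_edges ?pp) \<and> \<epsilon> \<noteq> {rev g ! (length (rev g) - 1 - 1), rev g ! (length (rev g) - 1)}}. q \<epsilon> u)"
    have hpp: "hd ?pp = last (rev g)" using pps g_path g_ne by (simp add: last_rev)
    note fac = factor[OF rg pps(1) hpp m3, of q, folded Z_def]
    have rv0: "rev g ! 0 = v'" using g_path g_ne by (simp add: rev_nth last_conv_nth)
    have rvn: "rev g ! (length (rev g) - 1) = v" using g_ne g0 by (simp add: rev_nth)
    have rvn1: "rev g ! (length (rev g) - 1 - 1) = g ! 1" using g_len by (simp add: rev_nth)
    have e1: "{rev g ! 0, rev g ! 1} = {g ! (n - 1), g ! n}" using rv0 r1 gn by (simp add: insert_commute)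
    have e2: "{rev g ! (length (rev g) - 1 - 1), rev g ! (length (rev g) - 1)} = {g ! 0, g ! 1}"
      using rvn rvn1 g0 by (simp add: insert_commute)
    have xv': "x_va V A E f q v' \<alpha> = f \<alpha> * (Qp * Z)"
      using xva[OF a vX(2)] fac(1) spl e1 rv0 by simp
    have xv: "x_va V A E f q v \<alpha> = f \<alpha> * (qq * Z)"
      using xva[OF a vX(1)] fac(2) e2 rvn by simp
    show ?thesis unfolding xv xv' by (simp add: algebra_simps)
  qed
  show "qq * x_va V A E f q v' \<alpha> - Qp * x_va V A E f q v \<alpha> \<le> 0"
    using case1 case2 by (cases "g ! (n - 1) \<in> set ?p") auto
  show "f \<alpha> > 0 \<Longrightarrow> tree_less V A E v0 v' \<alpha> \<Longrightarrow> qq * x_va V A E f q v' \<alpha> - Qp * x_va V A E f q v \<alpha> < 0"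
    using case1 strict_case[OF a] by blast
qed

end
context setting begin

lemma main:
  shows "let \<gamma> = gpath (V \<union> A) E v v'; n = length \<gamma> - 1;
             qq = q {\<gamma> ! 0, \<gamma> ! 1} v;
             Q' = bigQ E q {\<gamma> ! (n - 1), \<gamma> ! n} v';
             D = qq * N_v V A E f q v' - Q' * N_v V A E f q v
         in (qq > 0 \<and> Q' > 0 \<and> D \<le> 0) \<and>
            ((\<exists>\<alpha>\<in>A - A0 A f. tree_less V A E v0 v' \<alpha>) \<longrightarrow> D < 0)"
proof -
  have "0 < n" using n1 by simp
  then have qqpos: "qq > 0" using s_pos[of 0] g0 by simp
  have D: "qq * N_v V A E f q v' - Qp * N_v V A E f q v
      = (\<Sum>\<alpha>\<in>A - A0 A f. qq * x_va V A E f q v' \<alpha> - Qp * x_va V A E f q v \<alpha>)"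
    unfolding N_v_def by (simp add: sum_distrib_left sum_subtractf)
  have le: "qq * N_v V A E f q v' - Qp * N_v V A E f q v \<le> 0"
    unfolding D by (rule sum_nonpos) (use per_alpha(1) in blast)
  have lt: "qq * N_v V A E f q v' - Qp * N_v V A E f q v < 0"
    if ex: "\<exists>\<alpha>\<in>A - A0 A f. tree_less V A E v0 v' \<alpha>"
  proof -
    obtain \<alpha> where a: "\<alpha> \<in> A - A0 A f" "tree_less V A E v0 v' \<alpha>" using ex by blast
    have fa: "f \<alpha> > 0" using a(1) fpos unfolding A0_def by force
    have finA: "finite A" using dt unfolding decorated_tree_def by simp
    have "(\<Sum>\<alpha>\<in>A - A0 A f. qq * x_va V A E f q v' \<alpha> - Qp * x_va V A E f q v \<alpha>) < (\<Sum>\<alpha>\<in>A - A0 A f. 0)"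
    proof (rule sum_strict_mono_ex1)
      show "finite (A - A0 A f)" using finA by simp
      show "\<forall>x\<in>A - A0 A f. qq * x_va V A E f q v' x - Qp * x_va V A E f q v x \<le> 0"
        using per_alpha(1) by blast
      show "\<exists>x\<in>A - A0 A f. qq * x_va V A E f q v' x - Qp * x_va V A E f q v x < 0"
        using per_alpha(2)[OF _ fa a(2)] a(1) by blast
    qed
    then show ?thesis unfolding D by simp
  qed
  show ?thesis unfolding Let_def using qqpos Q'_pos le lt by blast
qed

end

theorem proposition5p8:
  fixes V A :: "'a set" and E :: "'a set set" and f :: "'a \<Rightarrow> int"
    and q :: "'a set \<Rightarrow> 'a \<Rightarrow> int" and v0 v v' :: 'a
  assumes "decorated_rooted_tree V A E f q v0"
    and "negative_determinants V E q"
    and "\<forall>\<alpha>\<in>A. f \<alpha> \<ge> 0"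
    and "v \<in> V" and "v' \<in> V"
    and "tree_less V A E v0 v v'"
    and "linear_path E (gpath (V \<union> A) E v v')"
  shows "let \<gamma> = gpath (V \<union> A) E v v'; n = length \<gamma> - 1;
             qq = q {\<gamma> ! 0, \<gamma> ! 1} v;
             Q' = bigQ E q {\<gamma> ! (n - 1), \<gamma> ! n} v';
             D = qq * N_v V A E f q v' - Q' * N_v V A E f q v
         in (qq > 0 \<and> Q' > 0 \<and> D \<le> 0) \<and>
            ((\<exists>\<alpha>\<in>A - A0 A f. tree_less V A E v0 v' \<alpha>) \<longrightarrow> D < 0)"
proof -
  interpret setting V A E f q v0 v v'
    using assms by unfold_locales
  show ?thesis by (rule main)
qed

end
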